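(* Assume $Ee^{\alpha X_1}<\infty$ and fix $T>0$. Let $\tilde Z$ be a $D$-valued random element with law $P(\tilde Z\in dw)=\mu^T(dw)/\mu^T(\mathcal D)$, where $$\mu^T(dw)=\int_0^T E\big(e^{\alpha X_{t-}};\,X_{[0,t)}\in dw\big)\,dt,\qquad \mu^T(\mathcal D)=\int_0^T Ee^{\alpha X_t}\,dt.$$ Let $Z$ be the Esscher transform of $X$, i.e. the process such that for every $s\ge0$ and every Borel set $B_s\subset\mathbb R^{[0,s]}$, $P(\{Z_v:0\le v\le s\}\in B_s)=e^{-\psi(\alpha)s}E(e^{\alpha X_s};\{X_v:0\le v\le s\}\in B_s)$, and let $\tau$ be independent of $Z$ with $P(\tau\in dt)=I(0\le t<T)e^{\psi(\alpha)t}dt/\mu^T(\mathcal D)$. Then $$\{\tilde Z_t:t<\tau_\Delta(\tilde Z)\}\overset{d}{=}\{Z_t:t<\tau\}.$$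
   Context: $\alpha>0$; $X$ is a real-valued Lévy process realized as the coordinate process on the Skorohod space $D$ of right-continuous paths with left limits taking values in $\mathbb R\cup\{\Delta\}$ ($\Delta$ an isolated cemetery point); $\psi(\alpha)=\ln Ee^{\alpha X_1}$. For $w\in D$, $\tau_\Delta(w)=\inf\{t>0:w_t=\Delta\}$, and the killed path $w_{[0,r)}$ equals $w_t$ for $t<r$ and $\Delta$ for $t\ge r$. *)

theory Defs
  imports "HOL-Probability.Probability"
begin

text \<open>State space R \<union> {Delta}: Delta is modelled by None, a real x by Some x.
  Delta is isolated; measurable sets are generated by Borel sets of reals and {Delta}.\<close>

definition state_M :: "real option measure" where
  "state_M = sigma UNIV (insert {None} ((\<lambda>B. Some ` B) ` sets borel))"

text \<open>Path space: paths indexed by time [0,\<infinity>), product (cylinder) sigma algebra,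
  which on D coincides with the Borel sigma algebra of the Skorohod topology.\<close>

definition path_M :: "(real \<Rightarrow> real option) measure" where
  "path_M = PiM {0..} (\<lambda>_. state_M)"

definition opt_tendsto :: "(real \<Rightarrow> real option) \<Rightarrow> real option \<Rightarrow> real filter \<Rightarrow> bool" where
  "opt_tendsto f l F \<longleftrightarrow>
     (case l of
        None \<Rightarrow> eventually (\<lambda>s. f s = None) F
      | Some x \<Rightarrow> eventually (\<lambda>s. f s \<noteq> None) F \<and> ((\<lambda>s. the (f s)) \<longlongrightarrow> x) F)"

definition D_set :: "(real \<Rightarrow> real option) set" where
  "D_set = {w \<in> extensional {0..}.
     (\<forall>t\<ge>0. opt_tendsto w (w t) (at_right t)) \<and>
     (\<forall>t>0. \<exists>l. opt_tendsto w l (at_left t))}"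

definition tau_Delta :: "(real \<Rightarrow> real option) \<Rightarrow> ereal" where
  "tau_Delta w = Inf {ereal t | t. t > 0 \<and> w t = None}"

definition kill :: "(real \<Rightarrow> real option) \<Rightarrow> ereal \<Rightarrow> (real \<Rightarrow> real option)" where
  "kill w r = (\<lambda>t\<in>{0..}. if ereal t < r then w t else None)"

definition path_of :: "(real \<Rightarrow> 'a \<Rightarrow> real) \<Rightarrow> 'a \<Rightarrow> (real \<Rightarrow> real option)" where
  "path_of X \<omega> = (\<lambda>t\<in>{0..}. Some (X t \<omega>))"

definition leftlim :: "(real \<Rightarrow> real) \<Rightarrow> real \<Rightarrow> real" where
  "leftlim f t = (if t \<le> 0 then f t else Lim (at_left t) f)"

definition levy_process :: "'a measure \<Rightarrow> (real \<Rightarrow> 'a \<Rightarrow> real) \<Rightarrow> bool" where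
  "levy_process M X \<longleftrightarrow>
     prob_space M \<and>
     (\<forall>t\<ge>0. X t \<in> borel_measurable M) \<and>
     (AE \<omega> in M. X 0 \<omega> = 0) \<and>
     (\<forall>\<omega>\<in>space M.
        (\<forall>t\<ge>0. continuous (at_right t) (\<lambda>s. X s \<omega>)) \<and>
        (\<forall>t>0. \<exists>l. ((\<lambda>s. X s \<omega>) \<longlongrightarrow> l) (at_left t))) \<and>
     (\<forall>s t. 0 \<le> s \<longrightarrow> 0 \<le> t \<longrightarrow>
        distr M borel (\<lambda>\<omega>. X (s + t) \<omega> - X s \<omega>) = distr M borel (X t)) \<and>
     (\<forall>(n::nat) (u::nat \<Rightarrow> real). 0 \<le> u 0 \<longrightarrow> (\<forall>i<n. u i \<le> u (Suc i)) \<longrightarrow>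
        prob_space.indep_vars M (\<lambda>_. borel) (\<lambda>i \<omega>. X (u (Suc i)) \<omega> - X (u i) \<omega>) {..<n})"

definition levy_psi :: "'a measure \<Rightarrow> (real \<Rightarrow> 'a \<Rightarrow> real) \<Rightarrow> real \<Rightarrow> real" where
  "levy_psi M X \<alpha> = ln (\<integral>\<omega>. exp (\<alpha> * X 1 \<omega>) \<partial>M)"

definition muT :: "'a measure \<Rightarrow> (real \<Rightarrow> 'a \<Rightarrow> real) \<Rightarrow> real \<Rightarrow> real
                  \<Rightarrow> (real \<Rightarrow> real option) set \<Rightarrow> ennreal" where
  "muT M X \<alpha> T A = (\<integral>\<^sup>+ t\<in>{0..T}. (\<integral>\<^sup>+ \<omega>. ennreal (exp (\<alpha> * leftlim (\<lambda>s. X s \<omega>) t))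
        * indicator A (kill (path_of X \<omega>) (ereal t)) \<partial>M) \<partial>lborel)"

definition muT_total :: "'a measure \<Rightarrow> (real \<Rightarrow> 'a \<Rightarrow> real) \<Rightarrow> real \<Rightarrow> real \<Rightarrow> ennreal" where
  "muT_total M X \<alpha> T = (\<integral>\<^sup>+ t\<in>{0..T}. (\<integral>\<^sup>+ \<omega>. ennreal (exp (\<alpha> * X t \<omega>)) \<partial>M) \<partial>lborel)"

end

theory Submission
  imports Defs
begin


lemma state_gen_Pow: "insert {None} ((\<lambda>B. Some ` B) ` sets borel) \<subseteq> Pow UNIV"
  by simp

lemma space_state_M[simp]: "space state_M = UNIV"
  unfolding state_M_def by (rule space_measure_of[OF state_gen_Pow])

lemma None_in_state_M[measurable]: "{None} \<in> sets state_M"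
  unfolding state_M_def sets_measure_of[OF state_gen_Pow] by (rule sigma_sets.Basic) simp



lemma Some_measurable[measurable]: "Some \<in> measurable borel state_M"
  unfolding state_M_def
proof (rule measurable_measure_of[OF state_gen_Pow])
  fix y assume "y \<in> insert {None} ((\<lambda>B. Some ` B) ` sets borel)"
  then show "Some -` y \<inter> space borel \<in> sets borel"
  proof
    assume "y = {None}"
    then have "Some -` y \<inter> space borel = {}" by auto
    then show ?thesis by (metis sets.empty_sets)
  next
    assume "y \<in> (\<lambda>B. Some ` B) ` sets borel"
    then obtain B where "B \<in> sets borel" "y = Some ` B" by blast
    then show ?thesis by (simp add: inj_vimage_image_eq)
  qed
qed simp

lemma space_path_M: "space path_M = PiE {0..} (\<lambda>_. UNIV)"
  unfolding path_M_def by (simp add: space_PiM)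

lemma pred_state_None: "x \<in> measurable M state_M \<Longrightarrow> Measurable.pred M (\<lambda>w. x w = None)"
  unfolding pred_def
  using measurable_sets[of x M state_M "{None}"] 
  by (simp add: vimage_def Int_def conj_commute)



lemma D_right:
  assumes "w \<in> D_set" "u \<ge> 0"
  shows "\<exists>c>u. \<forall>v. u < v \<and> v < c \<longrightarrow> (w v = None \<longleftrightarrow> w u = None)"
proof -
  from assms have ot: "opt_tendsto w (w u) (at_right u)" unfolding D_set_def by auto
  show ?thesis
  proof (cases "w u")
    case None
    with ot have "eventually (\<lambda>v. w v = None) (at_right u)" unfolding opt_tendsto_def by simp
    then obtain b where "b > u" "\<forall>y>u. y < b \<longrightarrow> w y = None"
      unfolding eventually_at_right_field by blast
    with None show ?thesis by auto
  next
    case (Some x)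
    with ot have "eventually (\<lambda>v. w v \<noteq> None) (at_right u)" unfolding opt_tendsto_def by simp
    then obtain b where "b > u" "\<forall>y>u. y < b \<longrightarrow> w y \<noteq> None"
      unfolding eventually_at_right_field by blast
    with Some show ?thesis by auto
  qed
qed

definition Pq :: "real \<Rightarrow> (real \<Rightarrow> real option) \<Rightarrow> bool" where
  "Pq s w \<longleftrightarrow> (w s \<noteq> None \<and> (\<forall>q::rat. 0 < real_of_rat q \<and> real_of_rat q \<le> s \<longrightarrow> w (real_of_rat q) \<noteq> None))"

lemma tau_lt_iff:
  assumes w: "w \<in> D_set" and s: "s \<ge> 0"
  shows "ereal s < tau_Delta w \<longleftrightarrow> Pq s w"
proof
  assume lt: "ereal s < tau_Delta w"
  then obtain r where r: "ereal s < ereal r" "ereal r < tau_Delta w" using ereal_dense2 by blast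
  have Sr: "w u \<noteq> None" if "0 < u" "u \<le> r" for u
  proof
    assume "w u = None"
    then have "tau_Delta w \<le> ereal u" unfolding tau_Delta_def using that by (auto intro!: Inf_lower)
    with r(2) have "ereal r < ereal u" by (rule order_less_le_trans)
    with that show False by simp
  qed
  have "w s \<noteq> None"
  proof (cases "s = 0")
    case True
    show ?thesis
    proof
      assume N: "w s = None"
      from D_right[OF w s] N obtain c where c: "c > s" "\<forall>v. s < v \<and> v < c \<longrightarrow> w v = None" by auto
      define v where "v = min c r / 2"
      have "0 < v" "v < c" "v \<le> r" using c r True by (auto simp: v_def)
      with c True Sr[of v] show False by auto
    qed
  next
    case False
    then show ?thesis using Sr[of s] s r by auto
  qed
  moreover have "\<forall>q::rat. 0 < real_of_rat q \<and> real_of_rat q \<le> s \<longrightarrow> w (real_of_rat q) \<noteq> None"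
    using Sr r by auto
  ultimately show "Pq s w" unfolding Pq_def by blast
next
  assume P: "Pq s w"
  then have ws: "w s \<noteq> None" and wq: "\<And>q. 0 < real_of_rat q \<Longrightarrow> real_of_rat q \<le> s \<Longrightarrow> w (real_of_rat q) \<noteq> None"
    unfolding Pq_def by auto
  from D_right[OF w s] ws obtain c where c: "c > s" "\<forall>v. s < v \<and> v < c \<longrightarrow> w v \<noteq> None" by auto
  have "ereal c \<le> tau_Delta w" unfolding tau_Delta_def
  proof (rule Inf_greatest, clarify)
    fix u assume u: "0 < u" "w u = None"
    show "ereal c \<le> ereal u"
    proof (rule ccontr)
      assume "\<not> ereal c \<le> ereal u"
      then have uc: "u < c" by simp
      consider "u < s" | "u = s" | "s < u" by linarith
      then show False
      proof cases
        case 1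
        from D_right[OF w, of u] u obtain c2 where c2: "c2 > u" "\<forall>v. u < v \<and> v < c2 \<longrightarrow> w v = None" by auto
        obtain q where q: "u < real_of_rat q" "real_of_rat q < min c2 s" using of_rat_dense[of u "min c2 s"] c2 1 by auto
        have "0 < real_of_rat q" using q u by linarith
        moreover have "real_of_rat q \<le> s" using q by simp
        ultimately have "w (real_of_rat q) \<noteq> None" by (rule wq)
        moreover have "w (real_of_rat q) = None" using c2 q by auto
        ultimately show False by simp
      next
        case 2 then show False using ws u by simp
      next
        case 3 then show False using c uc u by auto
      qed
    qed
  qed
  moreover have "ereal s < ereal c" using c by simp
  ultimately show "ereal s < tau_Delta w" by (rule order_less_le_trans[rotated])
qed



lemma comp_meas: "u \<ge> 0 \<Longrightarrow> (\<lambda>w. w u) \<in> measurable path_M state_M"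
  unfolding path_M_def by (rule measurable_component_singleton) simp

lemma pred_imp_const: "(c \<Longrightarrow> Measurable.pred M P) \<Longrightarrow> Measurable.pred M (\<lambda>x. c \<longrightarrow> P x)"
  by (cases c) auto

lemma pred_Pq: "s \<ge> 0 \<Longrightarrow> Measurable.pred path_M (Pq s)"
  unfolding Pq_def
  apply (rule pred_intros_logic(3))
   apply (rule pred_intros_logic(2))
   apply (rule pred_state_None[OF comp_meas], simp)
  apply (rule pred_intros_countable)
  apply (rule pred_imp_const)
  apply (rule pred_intros_logic(2))
  apply (rule pred_state_None[OF comp_meas], simp)
  done

lemma D_subset_space: "D_set \<subseteq> space path_M"
  unfolding space_path_M D_set_def PiE_def by auto

lemma G_meas: "(\<lambda>w. kill w (tau_Delta w)) \<in> measurable (restrict_space path_M D_set) path_M"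
proof -
  have "(\<lambda>w. \<lambda>t\<in>{0..}. if ereal t < tau_Delta w then w t else None) \<in> measurable (restrict_space path_M D_set) path_M"
    unfolding path_M_def[of] 
  proof (rule measurable_restrict)
    fix t :: real assume t: "t \<in> {0..}"
    have "(\<lambda>w. if Pq t w then w t else None) \<in> measurable path_M state_M"
      using t pred_Pq[of t] by (intro measurable_If comp_meas) (auto simp: pred_def)
    then have "(\<lambda>w. if Pq t w then w t else None) \<in> measurable (restrict_space path_M D_set) state_M"
      by (rule measurable_restrict_space1)
    moreover have "\<And>w. w \<in> space (restrict_space path_M D_set) \<Longrightarrow>
        (if ereal t < tau_Delta w then w t else None) = (if Pq t w then w t else None)"
      using t by (auto simp: space_restrict_space tau_lt_iff)
    ultimately show "(\<lambda>w. if ereal t < tau_Delta w then w t else None) \<in> measurable (restrict_space (Pi\<^sub>M {0..} (\<lambda>_. state_M)) D_set) state_M"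
      unfolding path_M_def by (subst measurable_cong) auto
  qed
  then show ?thesis unfolding kill_def by simp
qed



lemma kill_path_D:
  fixes f :: "real \<Rightarrow> real"
  assumes rc: "\<forall>t\<ge>0. continuous (at_right t) f"
    and ll: "\<forall>t>0. \<exists>l. (f \<longlongrightarrow> l) (at_left t)"
    and t: "t \<ge> 0"
  shows "kill (\<lambda>s\<in>{0..}. Some (f s)) (ereal t) \<in> D_set"
proof -
  define k where "k = kill (\<lambda>s\<in>{0..}. Some (f s)) (ereal t)"
  have k: "\<And>u. u \<ge> 0 \<Longrightarrow> k u = (if u < t then Some (f u) else None)"
    unfolding k_def kill_def by simp
  have ext: "k \<in> extensional {0..}" unfolding k_def kill_def by simp
  have R: "opt_tendsto k (k u) (at_right u)" if u: "u \<ge> 0" for u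
  proof (cases "u < t")
    case True
    have ev: "eventually (\<lambda>v. k v = Some (f v)) (at_right u)"
      unfolding eventually_at_right_field using True u by (intro exI[of _ t]) (auto simp: k)
    have "(f \<longlongrightarrow> f u) (at_right u)" using rc u by (simp add: continuous_within)
    then have "((\<lambda>v. the (k v)) \<longlongrightarrow> f u) (at_right u)"
      by (rule tendsto_cong[THEN iffD1, rotated]) (use ev in \<open>eventually_elim, simp\<close>)
    moreover have "eventually (\<lambda>v. k v \<noteq> None) (at_right u)" using ev by eventually_elim simp
    ultimately show ?thesis using True u by (simp add: opt_tendsto_def k)
  next
    case False
    have ev: "eventually (\<lambda>v. k v = None) (at_right u)"
      unfolding eventually_at_right_field using False u by (intro exI[of _ "u+1"]) (auto simp: k)
    then show ?thesis using False u by (simp add: opt_tendsto_def k)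
  qed
  have L: "\<exists>l. opt_tendsto k l (at_left u)" if u: "u > 0" for u
  proof (cases "u \<le> t")
    case True
    from ll u obtain l where l: "(f \<longlongrightarrow> l) (at_left u)" by blast
    have ev: "eventually (\<lambda>v. k v = Some (f v)) (at_left u)"
      unfolding eventually_at_left_field using True u by (intro exI[of _ 0]) (auto simp: k)
    from l have "((\<lambda>v. the (k v)) \<longlongrightarrow> l) (at_left u)"
      by (rule tendsto_cong[THEN iffD1, rotated]) (use ev in \<open>eventually_elim, simp\<close>)
    moreover have "eventually (\<lambda>v. k v \<noteq> None) (at_left u)" using ev by eventually_elim simp
    ultimately have "opt_tendsto k (Some l) (at_left u)" by (simp add: opt_tendsto_def)
    then show ?thesis by blast
  next
    case False
    have ev: "eventually (\<lambda>v. k v = None) (at_left u)"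
      unfolding eventually_at_left_field using False t by (intro exI[of _ t]) (auto simp: k)
    then have "opt_tendsto k None (at_left u)" by (simp add: opt_tendsto_def)
    then show ?thesis by blast
  qed
  show ?thesis using ext R L unfolding D_set_def k_def[symmetric] by auto
qed

lemma kill_fix:
  fixes f :: "real \<Rightarrow> real"
  assumes t: "t \<ge> 0"
  defines "k \<equiv> kill (\<lambda>s\<in>{0..}. Some (f s)) (ereal t)"
  shows "kill k (tau_Delta k) = k"
proof -
  have kk: "\<And>u. u \<ge> 0 \<Longrightarrow> k u = (if u < t then Some (f u) else None)"
    unfolding k_def kill_def by simp
  have tle: "ereal t \<le> tau_Delta k" unfolding tau_Delta_def
  proof (rule Inf_greatest, clarify)
    fix u assume "0 < u" "k u = None"
    then show "ereal t \<le> ereal u" using kk[of u] by (auto split: if_splits)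
  qed
  have "ereal u < tau_Delta k" if "u < t" for u
  proof -
    have "ereal u < ereal t" using that by simp
    then show ?thesis using tle by (rule order_less_le_trans)
  qed
  then show ?thesis
    unfolding kill_def[of k] by (auto simp: kk k_def[symmetric] intro!: ext) (simp add: k_def kill_def)
qed



lemma leftlim_ae:
  assumes levy: "levy_process M X" and t: "t > 0"
  shows "AE \<omega> in M. leftlim (\<lambda>s. X s \<omega>) t = X t \<omega>"
proof -
  interpret prob_space M using levy unfolding levy_process_def by simp
  have measX: "\<And>s. s \<ge> 0 \<Longrightarrow> X s \<in> borel_measurable M" using levy unfolding levy_process_def by simp
  have rc: "\<And>\<omega> s. \<omega> \<in> space M \<Longrightarrow> s \<ge> 0 \<Longrightarrow> continuous (at_right s) (\<lambda>s. X s \<omega>)"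
    and ll: "\<And>\<omega> s. \<omega> \<in> space M \<Longrightarrow> s > 0 \<Longrightarrow> \<exists>l. ((\<lambda>s. X s \<omega>) \<longlongrightarrow> l) (at_left s)"
    using levy unfolding levy_process_def by auto
  have X0: "AE \<omega> in M. X 0 \<omega> = 0" using levy unfolding levy_process_def by simp
  have stat: "\<And>s u. 0 \<le> s \<Longrightarrow> 0 \<le> u \<Longrightarrow> distr M borel (\<lambda>\<omega>. X (s + u) \<omega> - X s \<omega>) = distr M borel (X u)"
    using levy unfolding levy_process_def by blast
  define h where "h n = t / real (Suc (Suc n))" for n
  have hpos: "\<And>n. 0 < h n" using t by (simp add: h_def)
  have hlt: "\<And>n. h n < t" using t by (simp add: h_def divide_less_eq)
  have h0: "h \<longlonglongrightarrow> 0" unfolding h_def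
    using lim_const_over_n[of t] by (intro LIMSEQ_Suc) simp
  have hR: "filterlim h (at_right 0) sequentially"
    unfolding filterlim_at
  proof
    show "eventually (\<lambda>n. h n \<in> {0<..} \<and> h n \<noteq> 0) sequentially"
      using hpos by (intro always_eventually) (metis greaterThan_iff less_irrefl)
  qed (rule h0)
  have hL: "filterlim (\<lambda>n. t - h n) (at_left t) sequentially"
  proof -
    have "(\<lambda>n. t - h n) \<longlonglongrightarrow> t - 0" by (intro tendsto_intros h0)
    moreover have "eventually (\<lambda>n. t - h n \<in> {..<t} \<and> t - h n \<noteq> t) sequentially"
      using hpos by (intro always_eventually) (simp add: hpos less_imp_neq[OF hpos, symmetric])
    ultimately show ?thesis unfolding filterlim_at by simp
  qed
  have F1: "(\<lambda>n. X (t - h n) \<omega>) \<longlonglongrightarrow> leftlim (\<lambda>s. X s \<omega>) t" if \<omega>: "\<omega> \<in> space M" for \<omega>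
  proof -
    obtain l where l: "((\<lambda>s. X s \<omega>) \<longlongrightarrow> l) (at_left t)" using ll[OF \<omega> t] by blast
    then have "leftlim (\<lambda>s. X s \<omega>) t = l" using t unfolding leftlim_def
      by (simp add: tendsto_Lim)
    with filterlim_compose[OF l hL] show ?thesis by simp
  qed
  have F2: "(\<lambda>n. measure M {\<omega>\<in>space M. c < \<bar>X (h n) \<omega>\<bar>}) \<longlonglongrightarrow> 0" if c: "c > 0" for c
  proof -
    have meash: "\<And>n. X (h n) \<in> borel_measurable M" using hpos by (intro measX) (simp add: less_imp_le)
    have "(\<lambda>n. integral\<^sup>L M (indicator {\<omega>\<in>space M. c < \<bar>X (h n) \<omega>\<bar>})) \<longlonglongrightarrow> integral\<^sup>L M (\<lambda>_. 0::real)"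
    proof (rule integral_dominated_convergence[where w="\<lambda>_. 1"])
      show "(\<lambda>_. 0::real) \<in> borel_measurable M" by simp
      show "\<And>n. (indicator {\<omega>\<in>space M. c < \<bar>X (h n) \<omega>\<bar>} :: 'a \<Rightarrow> real) \<in> borel_measurable M"
        using meash by measurable
      show "integrable M (\<lambda>_. 1::real)" by simp
      show "\<And>n. AE x in M. norm (indicator {\<omega>\<in>space M. c < \<bar>X (h n) \<omega>\<bar>} x :: real) \<le> 1"
        by (auto simp: indicator_def)
      show "AE x in M. (\<lambda>n. indicator {\<omega>\<in>space M. c < \<bar>X (h n) \<omega>\<bar>} x :: real) \<longlonglongrightarrow> 0"
        using X0
      proof (eventually_elim)
        case (elim \<omega>)
        show ?case
        proof (cases "\<omega> \<in> space M")
          case True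
          have "((\<lambda>s. X s \<omega>) \<longlongrightarrow> X 0 \<omega>) (at_right 0)"
            using rc[OF True, of 0] by (simp add: continuous_within)
          from filterlim_compose[OF this hR] elim have "(\<lambda>n. X (h n) \<omega>) \<longlonglongrightarrow> 0" by simp
          then have "(\<lambda>n. \<bar>X (h n) \<omega>\<bar>) \<longlonglongrightarrow> \<bar>0\<bar>" by (rule tendsto_rabs)
          then have "eventually (\<lambda>n. \<bar>X (h n) \<omega>\<bar> < c) sequentially"
            using c by (intro order_tendstoD(2)) auto
          then have "eventually (\<lambda>n. indicator {\<omega>\<in>space M. c < \<bar>X (h n) \<omega>\<bar>} \<omega> = (0::real)) sequentially"
            by eventually_elim (auto simp: indicator_def)
          then show ?thesis by (rule tendsto_eventually)
        next
          case False then show ?thesis by (simp add: indicator_def)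
        qed
      qed
    qed
    moreover have "\<And>n. integral\<^sup>L M (indicator {\<omega>\<in>space M. c < \<bar>X (h n) \<omega>\<bar>}) = measure M {\<omega>\<in>space M. c < \<bar>X (h n) \<omega>\<bar>}"
      by (simp add: Int_absorb2)
    ultimately show ?thesis by simp
  qed
  define E where "E c n = {\<omega>\<in>space M. c < \<bar>X t \<omega> - X (t - h n) \<omega>\<bar>}" for c n
  have Emeas: "E c n \<in> sets M" for c n
  proof -
    have "X t \<in> borel_measurable M" "X (t - h n) \<in> borel_measurable M"
      using t hlt[of n] by (auto intro!: measX simp: less_imp_le)
    then show ?thesis unfolding E_def by measurable
  qed
  have F3: "measure M (E c n) = measure M {\<omega>\<in>space M. c < \<bar>X (h n) \<omega>\<bar>}" for c n
  proof -
    have s0: "0 \<le> t - h n" "0 \<le> h n" using hlt[of n] hpos[of n] by auto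
    have mX: "X (t - h n) \<in> borel_measurable M" "X (h n) \<in> borel_measurable M" "X (t - h n + h n) \<in> borel_measurable M"
      using s0 by (auto intro!: measX)
    have S: "{x::real. c < \<bar>x\<bar>} \<in> sets borel" by measurable
    have "measure (distr M borel (\<lambda>\<omega>. X (t - h n + h n) \<omega> - X (t - h n) \<omega>)) {x. c < \<bar>x\<bar>}
        = measure (distr M borel (X (h n))) {x. c < \<bar>x\<bar>}" using stat[OF s0] by simp
    moreover have "measure (distr M borel (\<lambda>\<omega>. X (t - h n + h n) \<omega> - X (t - h n) \<omega>)) {x. c < \<bar>x\<bar>} = measure M (E c n)"
      using mX by (subst measure_distr) (auto simp: E_def vimage_def intro!: arg_cong[where f="measure M"])
    moreover have "measure (distr M borel (X (h n))) {x. c < \<bar>x\<bar>} = measure M {\<omega>\<in>space M. c < \<bar>X (h n) \<omega>\<bar>}"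
      using mX by (subst measure_distr) (auto simp: vimage_def intro!: arg_cong[where f="measure M"])
    ultimately show ?thesis by simp
  qed
  have F4: "AE \<omega> in M. \<bar>X t \<omega> - leftlim (\<lambda>s. X s \<omega>) t\<bar> \<le> 2 * c" if c: "c > 0" for c
  proof (rule AE_I')
    show "(\<Union>N. \<Inter>n\<in>{N..}. E c n) \<in> null_sets M"
    proof (rule null_sets_UN)
      fix N :: nat
      have mI: "(\<Inter>n\<in>{N..}. E c n) \<in> sets M"
        using Emeas by (intro sets.countable_INT') auto
      have "measure M (\<Inter>n\<in>{N..}. E c n) \<le> 0"
      proof (rule LIMSEQ_le_const)
        show "(\<lambda>n. measure M (E c n)) \<longlonglongrightarrow> 0" using F2[OF c] by (simp add: F3)
        show "\<exists>N'. \<forall>n\<ge>N'. measure M (\<Inter>n\<in>{N..}. E c n) \<le> measure M (E c n)"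
          using Emeas by (intro exI[of _ N] allI impI finite_measure_mono) auto
      qed
      then have "measure M (\<Inter>n\<in>{N..}. E c n) = 0" by (simp add: antisym)
      then show "(\<Inter>n\<in>{N..}. E c n) \<in> null_sets M"
        using mI by (simp add: emeasure_eq_measure null_sets_def)
    qed
    show "{\<omega>\<in>space M. \<not> \<bar>X t \<omega> - leftlim (\<lambda>s. X s \<omega>) t\<bar> \<le> 2 * c} \<subseteq> (\<Union>N. \<Inter>n\<in>{N..}. E c n)"
    proof clarify
      fix \<omega> assume \<omega>: "\<omega> \<in> space M" and big: "\<not> \<bar>X t \<omega> - leftlim (\<lambda>s. X s \<omega>) t\<bar> \<le> 2 * c"
      have "(\<lambda>n. \<bar>X t \<omega> - X (t - h n) \<omega>\<bar>) \<longlonglongrightarrow> \<bar>X t \<omega> - leftlim (\<lambda>s. X s \<omega>) t\<bar>"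
        by (intro tendsto_intros F1 \<omega>)
      moreover have "c < \<bar>X t \<omega> - leftlim (\<lambda>s. X s \<omega>) t\<bar>" using big c by linarith
      ultimately have "eventually (\<lambda>n. c < \<bar>X t \<omega> - X (t - h n) \<omega>\<bar>) sequentially"
        by (rule order_tendstoD(1))
      then obtain N where "\<forall>n\<ge>N. c < \<bar>X t \<omega> - X (t - h n) \<omega>\<bar>" unfolding eventually_sequentially by blast
      then show "\<omega> \<in> (\<Union>N. \<Inter>n\<in>{N..}. E c n)" using \<omega> unfolding E_def by blast
    qed
  qed
  have "AE \<omega> in M. \<forall>k::nat. \<bar>X t \<omega> - leftlim (\<lambda>s. X s \<omega>) t\<bar> \<le> 2 * (1 / real (Suc k))"
    unfolding AE_all_countable by (intro allI F4) simp
  then show ?thesis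
  proof eventually_elim
    case (elim \<omega>)
    show ?case
    proof (rule ccontr)
      assume "leftlim (\<lambda>s. X s \<omega>) t \<noteq> X t \<omega>"
      then have "0 < \<bar>X t \<omega> - leftlim (\<lambda>s. X s \<omega>) t\<bar> / 2" by simp
      from ex_inverse_of_nat_less[OF this] obtain n :: nat where n: "n > 0" "inverse (real n) < \<bar>X t \<omega> - leftlim (\<lambda>s. X s \<omega>) t\<bar> / 2" by blast
      from elim[rule_format, of "n - 1"] n show False by (simp add: field_simps)
    qed
  qed
qed



lemma K_meas:
  assumes t: "t \<ge> 0"
  shows "(\<lambda>v. kill (\<lambda>s\<in>{0..}. Some (v s)) (ereal t)) \<in> measurable (PiM {0..t} (\<lambda>_. (borel::real measure))) path_M"
proof -
  have "(\<lambda>v. \<lambda>s\<in>{0..}. if s < t then Some (v s) else None) \<in> measurable (PiM {0..t} (\<lambda>_. (borel::real measure))) path_M"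
    unfolding path_M_def
  proof (rule measurable_restrict)
    fix s :: real assume s: "s \<in> {0..}"
    show "(\<lambda>v. if s < t then Some (v s) else None) \<in> measurable (PiM {0..t} (\<lambda>_. (borel::real measure))) state_M"
    proof (cases "s < t")
      case True
      have "(\<lambda>v. v s) \<in> measurable (PiM {0..t} (\<lambda>_. (borel::real measure))) borel"
        using s True by (intro measurable_component_singleton) auto
      then have "(\<lambda>v. Some (v s)) \<in> measurable (PiM {0..t} (\<lambda>_. (borel::real measure))) state_M"
        by (rule measurable_compose) (rule Some_measurable)
      with True show ?thesis by simp
    next
      case False then show ?thesis by simp
    qed
  qed
  moreover have "\<And>v. kill (\<lambda>s\<in>{0..}. Some (v s)) (ereal t) = (\<lambda>s\<in>{0..}. if s < t then Some (v s) else None)"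
    by (auto simp: kill_def)
  ultimately show ?thesis by simp
qed

lemma K_restr:
  assumes "t \<ge> 0"
  shows "kill (\<lambda>s\<in>{0..}. Some ((\<lambda>v\<in>{0..t}. f v) s)) (ereal t) = kill (\<lambda>s\<in>{0..}. Some (f s)) (ereal t)"
  using assms by (auto simp: kill_def intro!: ext)

lemma H_meas:
  "(\<lambda>p. kill (\<lambda>s\<in>{0..}. Some (snd p s)) (ereal (fst p))) \<in> measurable (lborel \<Otimes>\<^sub>M PiM {0..} (\<lambda>_. (borel::real measure))) path_M"
proof -
  have "(\<lambda>p. \<lambda>s\<in>{0..}. if s < fst p then Some (snd p s) else None) \<in> measurable (lborel \<Otimes>\<^sub>M PiM {0..} (\<lambda>_. (borel::real measure))) path_M"
    unfolding path_M_def
  proof (rule measurable_restrict)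
    fix s :: real assume s: "s \<in> {0..}"
    have c: "(\<lambda>p. snd p s) \<in> measurable (lborel \<Otimes>\<^sub>M PiM {0..} (\<lambda>_. (borel::real measure))) borel"
      using s by (intro measurable_compose[OF measurable_snd] measurable_component_singleton) auto
    have "(\<lambda>p. Some (snd p s)) \<in> measurable (lborel \<Otimes>\<^sub>M PiM {0..} (\<lambda>_. (borel::real measure))) state_M"
      using c by (rule measurable_compose) (rule Some_measurable)
    moreover have "{p \<in> space (lborel \<Otimes>\<^sub>M PiM {0..} (\<lambda>_. (borel::real measure))). s < fst p} \<in> sets (lborel \<Otimes>\<^sub>M PiM {0..} (\<lambda>_. (borel::real measure)))"
      by measurable
    ultimately show "(\<lambda>p. if s < fst p then Some (snd p s) else None) \<in> measurable (lborel \<Otimes>\<^sub>M PiM {0..} (\<lambda>_. (borel::real measure))) state_M"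
      by (intro measurable_If) auto
  qed
  moreover have "\<And>p. kill (\<lambda>s\<in>{0..}. Some (snd p s)) (ereal (fst p)) = (\<lambda>s\<in>{0..}. if s < fst p then Some (snd p s) else None)"
    by (auto simp: kill_def)
  ultimately show ?thesis by simp
qed



lemma ennreal_mult_ind: "ennreal (a * indicator A x) = ennreal a * indicator A x"
  by (simp add: indicator_def)

theorem proposition6p1:
  fixes M :: "'a measure" and X :: "real \<Rightarrow> 'a \<Rightarrow> real"
    and M1 :: "'b measure" and Zt :: "'b \<Rightarrow> (real \<Rightarrow> real option)"
    and N :: "'c measure" and Z :: "real \<Rightarrow> 'c \<Rightarrow> real" and \<tau> :: "'c \<Rightarrow> real"
    and \<alpha> T :: real
  assumes alpha_pos: "\<alpha> > 0"
    and levy: "levy_process M X"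
    and exp_mom: "integrable M (\<lambda>\<omega>. exp (\<alpha> * X 1 \<omega>))"
    and T_pos: "T > 0"
    and M1_prob: "prob_space M1"
    and Zt_meas: "Zt \<in> measurable M1 path_M"
    and Zt_D: "\<forall>\<omega>\<in>space M1. Zt \<omega> \<in> D_set"
    and Zt_law: "\<forall>A\<in>sets path_M.
        emeasure M1 (Zt -` A \<inter> space M1) = muT M X \<alpha> T A / muT_total M X \<alpha> T"
    and N_prob: "prob_space N"
    and Z_meas: "\<forall>v\<ge>0. Z v \<in> borel_measurable N"
    and Z_esscher: "\<forall>s\<ge>0. \<forall>B\<in>sets (PiM {0..s} (\<lambda>_. borel)).
        measure N {\<omega>\<in>space N. (\<lambda>v\<in>{0..s}. Z v \<omega>) \<in> B}
          = exp (- levy_psi M X \<alpha> * s) *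
            (\<integral>\<omega>. exp (\<alpha> * X s \<omega>) * indicator B (\<lambda>v\<in>{0..s}. X v \<omega>) \<partial>M)"
    and tau_indep: "prob_space.indep_set N
        (sigma_sets (space N) {\<tau> -` A \<inter> space N | A. A \<in> sets borel})
        (sigma_sets (space N) {(\<lambda>\<omega>. \<lambda>v\<in>{0..}. Z v \<omega>) -` A \<inter> space N
                                | A. A \<in> sets (PiM {0..} (\<lambda>_. (borel :: real measure)))})"
    and tau_distr: "distributed N lborel \<tau>
        (\<lambda>t. ennreal (indicator {0..<T} t * exp (levy_psi M X \<alpha> * t)) / muT_total M X \<alpha> T)"
  shows "distr M1 path_M (\<lambda>\<omega>. kill (Zt \<omega>) (tau_Delta (Zt \<omega>)))
       = distr N path_M (\<lambda>\<omega>. kill (path_of Z \<omega>) (ereal (\<tau> \<omega>)))"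
proof -
  interpret M: prob_space M using levy unfolding levy_process_def by simp
  interpret N: prob_space N by (rule N_prob)
  define \<psi> where "\<psi> = levy_psi M X \<alpha>"
  define \<mu>D where "\<mu>D = muT_total M X \<alpha> T"
  define P where "P = PiM {0::real..} (\<lambda>_. (borel :: real measure))"
  define G where "G = (\<lambda>w. kill w (tau_Delta w))"
  define Y where "Y = (\<lambda>\<omega>. \<lambda>v\<in>{0..}. Z v \<omega>)"
  define H where "H = (\<lambda>p. kill (\<lambda>s\<in>{0..}. Some (snd p s)) (ereal (fst p)))"
  define kX where "kX = (\<lambda>t \<omega>. kill (path_of X \<omega>) (ereal t))"
  define J where "J = (\<lambda>A t. \<integral>\<^sup>+ \<omega>. ennreal (exp (\<alpha> * X t \<omega>)) * indicator A (kX t \<omega>) \<partial>M)"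
  have measX: "\<And>s. s \<ge> 0 \<Longrightarrow> X s \<in> borel_measurable M" using levy unfolding levy_process_def by simp
  have rcX: "\<And>\<omega>. \<omega> \<in> space M \<Longrightarrow> \<forall>s\<ge>0. continuous (at_right s) (\<lambda>s. X s \<omega>)"
    and llX: "\<And>\<omega>. \<omega> \<in> space M \<Longrightarrow> \<forall>s>0. \<exists>l. ((\<lambda>s. X s \<omega>) \<longlongrightarrow> l) (at_left s)"
    using levy unfolding levy_process_def by auto
  have pathX: "\<And>\<omega>. path_of X \<omega> = (\<lambda>s\<in>{0..}. Some ((\<lambda>s. X s \<omega>) s))" by (simp add: path_of_def)

  have restrX_meas: "(\<lambda>\<omega>. \<lambda>v\<in>{0..t}. X v \<omega>) \<in> measurable M (PiM {0..t} (\<lambda>_. borel))" if "t \<ge> 0" for t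
    using that by (intro measurable_restrict measX) auto
  have kX_eq: "kX t \<omega> = kill (\<lambda>s\<in>{0..}. Some ((\<lambda>v\<in>{0..t}. X v \<omega>) s)) (ereal t)" if "t \<ge> 0" for t \<omega>
    unfolding kX_def path_of_def using K_restr[OF that, of "\<lambda>s. X s \<omega>"] by simp
  have kX_meas: "kX t \<in> measurable M path_M" if t: "t \<ge> 0" for t
  proof -
    have e: "kX t = (\<lambda>\<omega>. kill (\<lambda>s\<in>{0..}. Some ((\<lambda>v\<in>{0..t}. X v \<omega>) s)) (ereal t))"
      by (rule ext) (rule kX_eq[OF t])
    show ?thesis unfolding e by (rule measurable_compose[OF restrX_meas[OF t] K_meas[OF t]])
  qed
  have expX_int: "integrable M (\<lambda>\<omega>. exp (\<alpha> * X t \<omega>))" if t: "t \<ge> 0" for t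
  proof (rule ccontr)
    assume ni: "\<not> ?thesis"
    have sp: "space (PiM {0..t} (\<lambda>_. (borel::real measure))) \<in> sets (PiM {0..t} (\<lambda>_. borel))" by simp
    have "measure N {\<omega>\<in>space N. (\<lambda>v\<in>{0..t}. Z v \<omega>) \<in> space (PiM {0..t} (\<lambda>_. (borel::real measure)))}
      = exp (- \<psi> * t) * (\<integral>\<omega>. exp (\<alpha> * X t \<omega>) * indicator (space (PiM {0..t} (\<lambda>_. (borel::real measure)))) (\<lambda>v\<in>{0..t}. X v \<omega>) \<partial>M)"
      using Z_esscher t sp unfolding \<psi>_def by blast
    moreover have "{\<omega>\<in>space N. (\<lambda>v\<in>{0..t}. Z v \<omega>) \<in> space (PiM {0..t} (\<lambda>_. (borel::real measure)))} = space N"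
      by (auto simp: space_PiM)
    moreover have "(\<lambda>\<omega>. exp (\<alpha> * X t \<omega>) * indicator (space (PiM {0..t} (\<lambda>_. (borel::real measure)))) (\<lambda>v\<in>{0..t}. X v \<omega>)) = (\<lambda>\<omega>. exp (\<alpha> * X t \<omega>))"
      by (auto simp: space_PiM)
    ultimately have "1 = exp (- \<psi> * t) * (\<integral>\<omega>. exp (\<alpha> * X t \<omega>) \<partial>M)" by (simp add: N.prob_space)
    with not_integrable_integral_eq[OF ni] show False by simp
  qed
  have I_int: "integrable M (\<lambda>\<omega>. exp (\<alpha> * X t \<omega>) * indicator A (kX t \<omega>))" if t: "t \<ge> 0" and A: "A \<in> sets path_M" for t A
  proof (rule Bochner_Integration.integrable_bound[OF expX_int[OF t]])
    show "(\<lambda>\<omega>. exp (\<alpha> * X t \<omega>) * indicator A (kX t \<omega>)) \<in> borel_measurable M"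
    proof -
      have "{x\<in>space M. kX t x \<in> A} = kX t -` A \<inter> space M" by auto
      then have "Measurable.pred M (\<lambda>x. kX t x \<in> A)"
        using measurable_sets[OF kX_meas[OF t] A] by (simp add: pred_def)
      then show ?thesis using measX[OF t] by measurable
    qed
    show "AE x in M. norm (exp (\<alpha> * X t x) * indicator A (kX t x)) \<le> norm (exp (\<alpha> * X t x))"
      by (auto simp: indicator_def)
  qed
  have J_eq: "J A t = ennreal (\<integral>\<omega>. exp (\<alpha> * X t \<omega>) * indicator A (kX t \<omega>) \<partial>M)" if t: "t \<ge> 0" and A: "A \<in> sets path_M" for t A
    unfolding J_def ennreal_mult_ind[symmetric]
    by (rule nn_integral_eq_integral[OF I_int[OF t A]]) (auto simp: indicator_def)
  have QZ_eq: "emeasure N {\<omega>\<in>space N. kill (path_of Z \<omega>) (ereal t) \<in> A}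
      = ennreal (exp (- \<psi> * t) * (\<integral>\<omega>. exp (\<alpha> * X t \<omega>) * indicator A (kX t \<omega>) \<partial>M))"
    if t: "t \<ge> 0" and A: "A \<in> sets path_M" for t A
  proof -
    define B where "B = (\<lambda>v. kill (\<lambda>s\<in>{0..}. Some (v s)) (ereal t)) -` A \<inter> space (PiM {0..t} (\<lambda>_. (borel::real measure)))"
    have B: "B \<in> sets (PiM {0..t} (\<lambda>_. borel))" unfolding B_def by (rule measurable_sets[OF K_meas[OF t] A])
    have "{\<omega>\<in>space N. kill (path_of Z \<omega>) (ereal t) \<in> A} = {\<omega>\<in>space N. (\<lambda>v\<in>{0..t}. Z v \<omega>) \<in> B}"
      using K_restr[OF t, of "\<lambda>s. Z s _"] by (auto simp: B_def space_PiM path_of_def)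
    moreover have "\<And>\<omega>. indicator B (\<lambda>v\<in>{0..t}. X v \<omega>) = (indicator A (kX t \<omega>) :: real)"
      using kX_eq[OF t] by (auto simp: B_def space_PiM indicator_def)
    ultimately show ?thesis
      using Z_esscher t B unfolding \<psi>_def by (simp add: N.emeasure_eq_measure)
  qed
  have I_nonneg: "0 \<le> (\<integral>\<omega>. exp (\<alpha> * X t \<omega>) * indicator A (kX t \<omega>) \<partial>M)" for t A
    by (rule integral_nonneg_AE) auto

  have Zt_r: "Zt \<in> measurable M1 (restrict_space path_M D_set)"
    using Zt_D Zt_meas by (intro measurable_restrict_space2) auto
  have Gm: "(\<lambda>\<omega>. G (Zt \<omega>)) \<in> measurable M1 path_M"
    unfolding G_def by (rule measurable_compose[OF Zt_r G_meas])
  have LHS: "emeasure M1 ((\<lambda>\<omega>. G (Zt \<omega>)) -` A \<inter> space M1) = (\<integral>\<^sup>+ t. J A t * indicator {0..T} t \<partial>lborel) / \<mu>D"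
    if A: "A \<in> sets path_M" for A
  proof -
    have "G -` A \<inter> space (restrict_space path_M D_set) \<in> sets (restrict_space path_M D_set)"
      unfolding G_def by (rule measurable_sets[OF G_meas A])
    then obtain A' where A': "A' \<in> sets path_M" and GA: "G -` A \<inter> space (restrict_space path_M D_set) = D_set \<inter> A'"
      unfolding sets_restrict_space by auto
    have spD: "space (restrict_space path_M D_set) = D_set"
      using D_subset_space by (auto simp: space_restrict_space)
    have key: "G w \<in> A \<longleftrightarrow> w \<in> A'" if "w \<in> D_set" for w
      using GA that spD by blast
    have "(\<lambda>\<omega>. G (Zt \<omega>)) -` A \<inter> space M1 = Zt -` A' \<inter> space M1"
      using key Zt_D by auto
    then have "emeasure M1 ((\<lambda>\<omega>. G (Zt \<omega>)) -` A \<inter> space M1) = muT M X \<alpha> T A' / \<mu>D"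
      using Zt_law A' unfolding \<mu>D_def by simp
    also have "muT M X \<alpha> T A' = (\<integral>\<^sup>+ t. J A t * indicator {0..T} t \<partial>lborel)"
      unfolding muT_def
    proof (rule nn_integral_cong)
      fix t :: real
      show "(\<integral>\<^sup>+ \<omega>. ennreal (exp (\<alpha> * leftlim (\<lambda>s. X s \<omega>) t)) * indicator A' (kill (path_of X \<omega>) (ereal t)) \<partial>M) * indicator {0..T} t
          = J A t * indicator {0..T} t"
      proof (cases "t \<in> {0..T}")
        case True
        then have t: "t \<ge> 0" by simp
        have ae: "AE \<omega> in M. leftlim (\<lambda>s. X s \<omega>) t = X t \<omega>"
        proof (cases "t = 0")
          case True then show ?thesis by (simp add: leftlim_def)
        next
          case False then show ?thesis using t by (intro leftlim_ae[OF levy]) simp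
        qed
        have "(\<integral>\<^sup>+ \<omega>. ennreal (exp (\<alpha> * leftlim (\<lambda>s. X s \<omega>) t)) * indicator A' (kill (path_of X \<omega>) (ereal t)) \<partial>M) = J A t"
          unfolding J_def
        proof (rule nn_integral_cong_AE)
          show "AE \<omega> in M. ennreal (exp (\<alpha> * leftlim (\<lambda>s. X s \<omega>) t)) * indicator A' (kill (path_of X \<omega>) (ereal t))
              = ennreal (exp (\<alpha> * X t \<omega>)) * indicator A (kX t \<omega>)"
            using ae AE_space
          proof eventually_elim
            case (elim \<omega>)
            have kD: "kX t \<omega> \<in> D_set" unfolding kX_def pathX
              by (rule kill_path_D[OF rcX[OF elim(2)] llX[OF elim(2)] t])
            have kF: "G (kX t \<omega>) = kX t \<omega>" unfolding kX_def pathX G_def by (rule kill_fix[OF t])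
            have "kX t \<omega> \<in> A' \<longleftrightarrow> kX t \<omega> \<in> A" using key[OF kD] kF by simp
            then show ?case using elim(1) by (simp add: kX_def indicator_def)
          qed
        qed
        then show ?thesis by simp
      next
        case False then show ?thesis by simp
      qed
    qed
    finally show ?thesis .
  qed

  have \<tau>m: "\<tau> \<in> measurable N lborel" using tau_distr by (rule distributed_measurable)
  have fm: "(\<lambda>t. ennreal (indicator {0..<T} t * exp (\<psi> * t)) / \<mu>D) \<in> borel_measurable lborel"
    using distributed_borel_measurable[OF tau_distr] unfolding \<psi>_def \<mu>D_def .
  have distr_tau: "distr N lborel \<tau> = density lborel (\<lambda>t. ennreal (indicator {0..<T} t * exp (\<psi> * t)) / \<mu>D)"
    using distributed_distr_eq_density[OF tau_distr] unfolding \<psi>_def \<mu>D_def .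
  have Ym: "Y \<in> measurable N P" unfolding Y_def P_def using Z_meas by (intro measurable_restrict) auto
  interpret PT: prob_space "distr N lborel \<tau>" by (rule N.prob_space_distr[OF \<tau>m])
  interpret PY: prob_space "distr N P Y" by (rule N.prob_space_distr[OF Ym])
  have joint: "distr N lborel \<tau> \<Otimes>\<^sub>M distr N P Y = distr N (lborel \<Otimes>\<^sub>M P) (\<lambda>x. (\<tau> x, Y x))"
  proof (rule pair_measure_eqI)
    show "sigma_finite_measure (distr N lborel \<tau>)" by (rule PT.sigma_finite_measure_axioms)
    show "sigma_finite_measure (distr N P Y)" by (rule PY.sigma_finite_measure_axioms)
    show "sets (distr N lborel \<tau> \<Otimes>\<^sub>M distr N P Y) = sets (distr N (lborel \<Otimes>\<^sub>M P) (\<lambda>x. (\<tau> x, Y x)))"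
      by simp
    fix A B assume A: "A \<in> sets (distr N lborel \<tau>)" and B: "B \<in> sets (distr N P Y)"
    then have A': "A \<in> sets borel" and B': "B \<in> sets P" by auto
    have a: "\<tau> -` A \<inter> space N \<in> sigma_sets (space N) {\<tau> -` A \<inter> space N | A. A \<in> sets borel}"
      using A' by (intro sigma_sets.Basic) blast
    have b: "Y -` B \<inter> space N \<in> sigma_sets (space N) {(\<lambda>\<omega>. \<lambda>v\<in>{0..}. Z v \<omega>) -` A \<inter> space N
                                | A. A \<in> sets (PiM {0..} (\<lambda>_. (borel :: real measure)))}"
      using B' unfolding Y_def P_def by (intro sigma_sets.Basic) blast
    have ind: "N.prob ((\<tau> -` A \<inter> space N) \<inter> (Y -` B \<inter> space N)) = N.prob (\<tau> -` A \<inter> space N) * N.prob (Y -` B \<inter> space N)"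
      by (rule N.indep_setD[OF tau_indep a b])
    have e1: "emeasure (distr N lborel \<tau>) A = emeasure N (\<tau> -` A \<inter> space N)"
      using A by (intro emeasure_distr[OF \<tau>m]) simp
    have e2: "emeasure (distr N P Y) B = emeasure N (Y -` B \<inter> space N)"
      using B by (intro emeasure_distr[OF Ym]) simp
    have AB: "A \<times> B \<in> sets (lborel \<Otimes>\<^sub>M P)" using A B by auto
    have e3: "emeasure (distr N (lborel \<Otimes>\<^sub>M P) (\<lambda>x. (\<tau> x, Y x))) (A \<times> B) = emeasure N ((\<lambda>x. (\<tau> x, Y x)) -` (A \<times> B) \<inter> space N)"
      using AB \<tau>m Ym by (intro emeasure_distr) auto
    have "(\<lambda>x. (\<tau> x, Y x)) -` (A \<times> B) \<inter> space N = (\<tau> -` A \<inter> space N) \<inter> (Y -` B \<inter> space N)" by auto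
    then show "emeasure (distr N lborel \<tau>) A * emeasure (distr N P Y) B = emeasure (distr N (lborel \<Otimes>\<^sub>M P) (\<lambda>x. (\<tau> x, Y x))) (A \<times> B)"
      unfolding e1 e2 e3 using ind by (simp add: N.emeasure_eq_measure ennreal_mult)
  qed
  have Hm: "H \<in> measurable (lborel \<Otimes>\<^sub>M P) path_M" unfolding H_def P_def by (rule H_meas)
  have FHt: "kill (path_of Z \<omega>) (ereal t) = H (t, Y \<omega>)" for \<omega> t
    unfolding H_def Y_def path_of_def by (simp cong: restrict_cong)
  have FH: "kill (path_of Z \<omega>) (ereal (\<tau> \<omega>)) = H (\<tau> \<omega>, Y \<omega>)" for \<omega>
    by (rule FHt)
  have RHS: "emeasure N ((\<lambda>\<omega>. kill (path_of Z \<omega>) (ereal (\<tau> \<omega>))) -` A \<inter> space N)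
      = (\<integral>\<^sup>+ t. J A t * indicator {0..T} t \<partial>lborel) / \<mu>D"
    if A: "A \<in> sets path_M" for A
  proof -
    define Sh where "Sh = H -` A \<inter> space (lborel \<Otimes>\<^sub>M P)"
    have Sh: "Sh \<in> sets (lborel \<Otimes>\<^sub>M P)" unfolding Sh_def by (rule measurable_sets[OF Hm A])
    have Sh': "Sh \<in> sets (distr N lborel \<tau> \<Otimes>\<^sub>M distr N P Y)" using Sh by simp
    define Q where "Q = (\<lambda>t. emeasure (distr N P Y) (Pair t -` Sh))"
    have Qm: "Q \<in> borel_measurable lborel"
      using PY.measurable_emeasure_Pair[OF Sh'] unfolding Q_def by (simp cong: measurable_cong_sets)
    have Q_eq: "Q t = emeasure N {\<omega>\<in>space N. kill (path_of Z \<omega>) (ereal t) \<in> A}" for t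
    proof -
      have "Pair t -` Sh \<in> sets P" using Sh by (rule sets_Pair1)
      then have "Q t = emeasure N (Y -` (Pair t -` Sh) \<inter> space N)"
        unfolding Q_def by (rule emeasure_distr[OF Ym])
      also have "Y -` (Pair t -` Sh) \<inter> space N = {\<omega>\<in>space N. kill (path_of Z \<omega>) (ereal t) \<in> A}"
        using measurable_space[OF Ym] by (auto simp: Sh_def FHt space_pair_measure)
      finally show ?thesis .
    qed
    have "emeasure N ((\<lambda>\<omega>. kill (path_of Z \<omega>) (ereal (\<tau> \<omega>))) -` A \<inter> space N)
        = emeasure N ((\<lambda>x. (\<tau> x, Y x)) -` Sh \<inter> space N)"
      using measurable_space[OF Ym] by (auto simp: Sh_def FH space_pair_measure intro!: arg_cong[where f="emeasure N"])
    also have "\<dots> = emeasure (distr N (lborel \<Otimes>\<^sub>M P) (\<lambda>x. (\<tau> x, Y x))) Sh"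
      using \<tau>m Ym Sh by (subst emeasure_distr) auto
    also have "\<dots> = emeasure (distr N lborel \<tau> \<Otimes>\<^sub>M distr N P Y) Sh" using joint by simp
    also have "\<dots> = (\<integral>\<^sup>+ t. Q t \<partial>distr N lborel \<tau>)"
      unfolding Q_def by (rule PY.emeasure_pair_measure_alt[OF Sh'])
    also have "\<dots> = (\<integral>\<^sup>+ t. ennreal (indicator {0..<T} t * exp (\<psi> * t)) / \<mu>D * Q t \<partial>lborel)"
      unfolding distr_tau by (rule nn_integral_density[OF fm Qm])
    also have "\<dots> = (\<integral>\<^sup>+ t. (ennreal (indicator {0..<T} t * exp (\<psi> * t)) * Q t) / \<mu>D \<partial>lborel)"
      by (simp add: ennreal_times_divide mult.commute)
    also have "\<dots> = (\<integral>\<^sup>+ t. ennreal (indicator {0..<T} t * exp (\<psi> * t)) * Q t \<partial>lborel) / \<mu>D"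
      by (rule nn_integral_divide) (use Qm in measurable)
    also have "(\<integral>\<^sup>+ t. ennreal (indicator {0..<T} t * exp (\<psi> * t)) * Q t \<partial>lborel) = (\<integral>\<^sup>+ t. J A t * indicator {0..T} t \<partial>lborel)"
    proof (rule nn_integral_cong_AE)
      show "AE t in lborel. ennreal (indicator {0..<T} t * exp (\<psi> * t)) * Q t = J A t * indicator {0..T} t"
        using AE_lborel_singleton[of T]
      proof eventually_elim
        case (elim t)
        show ?case
        proof (cases "t \<in> {0..<T}")
          case True
          then have t: "t \<ge> 0" by simp
          have "ennreal (exp (\<psi> * t)) * ennreal (exp (- \<psi> * t) * (\<integral>\<omega>. exp (\<alpha> * X t \<omega>) * indicator A (kX t \<omega>) \<partial>M))
              = ennreal (exp (\<psi> * t) * (exp (- \<psi> * t) * (\<integral>\<omega>. exp (\<alpha> * X t \<omega>) * indicator A (kX t \<omega>) \<partial>M)))"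
            using I_nonneg by (simp add: ennreal_mult)
          also have "exp (\<psi> * t) * (exp (- \<psi> * t) * (\<integral>\<omega>. exp (\<alpha> * X t \<omega>) * indicator A (kX t \<omega>) \<partial>M))
              = (\<integral>\<omega>. exp (\<alpha> * X t \<omega>) * indicator A (kX t \<omega>) \<partial>M)"
            by (simp add: mult.assoc[symmetric] exp_add[symmetric])
          finally show ?thesis using True Q_eq[of t] QZ_eq[OF t A] J_eq[OF t A] by simp
        next
          case False
          with elim show ?thesis by (auto simp: indicator_def)
        qed
      qed
    qed
    finally show ?thesis .
  qed

  have FM: "(\<lambda>\<omega>. kill (path_of Z \<omega>) (ereal (\<tau> \<omega>))) \<in> measurable N path_M"
    unfolding FH by (rule measurable_compose[OF _ Hm]) (use \<tau>m Ym in measurable)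
  show ?thesis
  proof (rule measure_eqI)
    show "sets (distr M1 path_M (\<lambda>\<omega>. kill (Zt \<omega>) (tau_Delta (Zt \<omega>)))) = sets (distr N path_M (\<lambda>\<omega>. kill (path_of Z \<omega>) (ereal (\<tau> \<omega>))))"
      by simp
    fix A assume "A \<in> sets (distr M1 path_M (\<lambda>\<omega>. kill (Zt \<omega>) (tau_Delta (Zt \<omega>))))"
    then have A: "A \<in> sets path_M" by simp
    show "emeasure (distr M1 path_M (\<lambda>\<omega>. kill (Zt \<omega>) (tau_Delta (Zt \<omega>)))) A = emeasure (distr N path_M (\<lambda>\<omega>. kill (path_of Z \<omega>) (ereal (\<tau> \<omega>)))) A"
      using Gm FM A LHS[OF A] RHS[OF A] unfolding G_def by (simp add: emeasure_distr)
  qed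
qed

end
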